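(* Let $\mathbf W=(w_{ij})$ be row-stochastic and compatible with the strongly connected digraph $\mathcal G$ with parameter $\bar m$, and let $(i^k,\mathbf d^k)$ satisfy the asynchrony model with constants $T,D$. Let $\widehat{\mathbf W}^k\in\mathbb R^{(D+2)I\times(D+2)I}$ be the augmented matrices defined in the context. Then for all $k\in\mathbb N_0$: (a) $\widehat{\mathbf W}^k$ is row-stochastic; (b) all entries in the first $I$ columns of $\widehat{\mathbf W}^{k+K_1-1:k}$ are at least $\eta=\bar m^{K_1}$; (c) there exist a constant $C_2>0$ and a sequence of stochastic vectors $\{\boldsymbol\psi^k\}_{k\in\mathbb N_0}\subset\mathbb R^{(D+2)I}$ such that $\|\widehat{\mathbf W}^{k:t}-\mathbf 1\boldsymbol\psi^{t\top}\|\le C_2\rho^{k-t}$ for all $k\ge t\ge0$, with $\rho=(1-\bar m^{K_1})^{1/K_1}$, and $\psi_i^k\ge\eta$ for all $k$ and $i\in\{1,\dots,I\}$.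
   Context: $\mathcal G=(\mathcal V,\mathcal E)$, $\mathcal V=\{1,\dots,I\}$, strongly connected digraph without self-loops, $\mathcal N_i^{\rm in}=\{j:(j,i)\in\mathcal E\}$. Compatibility with parameter $\bar m\in(0,1)$: $w_{ii}\ge\bar m$, $w_{ij}\ge\bar m$ for $(j,i)\in\mathcal E$, $w_{ij}=0$ otherwise. Asynchrony model: $(i^k,\mathbf d^k)$, $i^k\in\mathcal V$, $\mathbf d^k=(d_j^k)_{j\in\mathcal N^{\rm in}_{i^k}}$, every agent appears among $i^k,\dots,i^{k+T-1}$ for all $k$, and $0\le d_j^k\le D$. $K_1=(2I-1)T+ID$. Augmented matrix $\widehat{\mathbf W}^k$ (rows/columns indexed $1,\dots,(D+2)I$): entry $(r,m)$ equals $w_{i^ki^k}$ if $r=m=i^k$; $w_{i^kj}$ if $r=i^k$ and $m=j+(d_j^k+1)I$ for $j\in\mathcal N^{\rm in}_{i^k}$; $1$ if $r=m\in\{1,\dots,2I\}\setminus\{i^k,i^k+I\}$; $1$ if $r\in\{2I+1,\dots,(D+2)I\}\cup\{i^k+I\}$ and $m=r-I$; $0$ otherwise. (This describes the update of the stacked vector $[\mathbf x^{k\top},\mathbf v^{k\top},\mathbf v^{k-1\top},\dots,\mathbf v^{k-D\top}]^\top$.) Products: $\widehat{\mathbf W}^{k:t}=\widehat{\mathbf W}^k\widehat{\mathbf W}^{k-1}\cdots\widehat{\mathbf W}^t$ for $k>t$, $=\widehat{\mathbf W}^t$ for $k=t$. $\|\cdot\|$ is the spectral norm. *)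

theory Defs
  imports "HOL-Analysis.Analysis"
begin

text \<open>Agents are 1..I; matrices/vectors of varying size are functions on nat,
  only the entries with indices in {1..n} being meaningful.\<close>

definition in_nbrs :: "(nat \<times> nat) set \<Rightarrow> nat \<Rightarrow> nat \<Rightarrow> nat set" where
  "in_nbrs E I i = {j \<in> {1..I}. (j, i) \<in> E}"

definition strongly_connected_digraph :: "nat \<Rightarrow> (nat \<times> nat) set \<Rightarrow> bool" where
  "strongly_connected_digraph I E \<longleftrightarrow>
     E \<subseteq> {1..I} \<times> {1..I} \<and> (\<forall>i. (i, i) \<notin> E) \<and>
     (\<forall>i\<in>{1..I}. \<forall>j\<in>{1..I}. (i, j) \<in> E\<^sup>*)"

definition row_stochastic :: "nat \<Rightarrow> (nat \<Rightarrow> nat \<Rightarrow> real) \<Rightarrow> bool" where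
  "row_stochastic n A \<longleftrightarrow>
     (\<forall>r\<in>{1..n}. \<forall>c\<in>{1..n}. A r c \<ge> 0) \<and> (\<forall>r\<in>{1..n}. (\<Sum>c=1..n. A r c) = 1)"

definition stochastic_vec :: "nat \<Rightarrow> (nat \<Rightarrow> real) \<Rightarrow> bool" where
  "stochastic_vec n v \<longleftrightarrow> (\<forall>c\<in>{1..n}. v c \<ge> 0) \<and> (\<Sum>c=1..n. v c) = 1"

definition compatible :: "nat \<Rightarrow> (nat \<times> nat) set \<Rightarrow> real \<Rightarrow> (nat \<Rightarrow> nat \<Rightarrow> real) \<Rightarrow> bool" where
  "compatible I E m W \<longleftrightarrow>
     (\<forall>i\<in>{1..I}. W i i \<ge> m) \<and>
     (\<forall>i\<in>{1..I}. \<forall>j\<in>{1..I}. (j, i) \<in> E \<longrightarrow> W i j \<ge> m) \<and>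
     (\<forall>i\<in>{1..I}. \<forall>j\<in>{1..I}. j \<noteq> i \<and> (j, i) \<notin> E \<longrightarrow> W i j = 0)"

text \<open>ik k = i^k, d k j = d_j^k.\<close>
definition asynchrony :: "nat \<Rightarrow> (nat \<times> nat) set \<Rightarrow> nat \<Rightarrow> nat \<Rightarrow>
    (nat \<Rightarrow> nat) \<Rightarrow> (nat \<Rightarrow> nat \<Rightarrow> nat) \<Rightarrow> bool" where
  "asynchrony I E T D ik d \<longleftrightarrow>
     (\<forall>k. ik k \<in> {1..I}) \<and>
     (\<forall>k. \<forall>i\<in>{1..I}. \<exists>s\<in>{k..<k+T}. ik s = i) \<and>
     (\<forall>k. \<forall>j\<in>in_nbrs E I (ik k). d k j \<le> D)"

definition K1 :: "nat \<Rightarrow> nat \<Rightarrow> nat \<Rightarrow> nat" where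
  "K1 I T D = (2 * I - 1) * T + I * D"

text \<open>Augmented matrix \<open>\<widehat>W^k\<close>, of size (D+2)I. The first case (row i^k) is written as a
  sum of the disjoint cases m = i^k and m = j + (d_j^k+1)I, j an in-neighbour.\<close>
definition Waug :: "nat \<Rightarrow> (nat \<times> nat) set \<Rightarrow> nat \<Rightarrow> (nat \<Rightarrow> nat \<Rightarrow> real) \<Rightarrow>
    (nat \<Rightarrow> nat) \<Rightarrow> (nat \<Rightarrow> nat \<Rightarrow> nat) \<Rightarrow> nat \<Rightarrow> nat \<Rightarrow> nat \<Rightarrow> real" where
  "Waug I E D W ik d k r m =
    (let i = ik k; N = (D + 2) * I in
     if r \<notin> {1..N} \<or> m \<notin> {1..N} then 0
     else if r = i then
       (if m = i then W i i else 0) +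
       (\<Sum>j\<in>in_nbrs E I i. if m = j + (d k j + 1) * I then W i j else 0)
     else if r = m \<and> r \<in> {1..2*I} - {i, i + I} then 1
     else if r \<in> {2*I+1..N} \<union> {i + I} \<and> m = r - I then 1
     else 0)"

definition mmult :: "nat \<Rightarrow> (nat \<Rightarrow> nat \<Rightarrow> real) \<Rightarrow> (nat \<Rightarrow> nat \<Rightarrow> real) \<Rightarrow> nat \<Rightarrow> nat \<Rightarrow> real" where
  "mmult n A B r c = (\<Sum>l=1..n. A r l * B l c)"

text \<open>Waug_prod ... t n = \<open>\<widehat>W^{t+n:t}\<close> = \<open>\<widehat>W^{t+n} \<cdots> \<widehat>W^t\<close>.\<close>
fun Waug_prod :: "nat \<Rightarrow> (nat \<times> nat) set \<Rightarrow> nat \<Rightarrow> (nat \<Rightarrow> nat \<Rightarrow> real) \<Rightarrow>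
    (nat \<Rightarrow> nat) \<Rightarrow> (nat \<Rightarrow> nat \<Rightarrow> nat) \<Rightarrow> nat \<Rightarrow> nat \<Rightarrow> nat \<Rightarrow> nat \<Rightarrow> real" where
  "Waug_prod I E D W ik d t 0 = Waug I E D W ik d t"
| "Waug_prod I E D W ik d t (Suc n) =
     mmult ((D + 2) * I) (Waug I E D W ik d (t + Suc n)) (Waug_prod I E D W ik d t n)"

definition spec_norm :: "nat \<Rightarrow> (nat \<Rightarrow> nat \<Rightarrow> real) \<Rightarrow> real" where
  "spec_norm n A = Sup {sqrt (\<Sum>r=1..n. (\<Sum>c=1..n. A r c * x c)\<^sup>2) | x.
                          (\<Sum>c=1..n. (x c)\<^sup>2) \<le> 1}"

end

theory Submission imports Defs begin

locale L5 =
  fixes I T D :: nat and E :: "(nat \<times> nat) set" and m :: real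
    and W :: "nat \<Rightarrow> nat \<Rightarrow> real" and ik :: "nat \<Rightarrow> nat" and d :: "nat \<Rightarrow> nat \<Rightarrow> nat"
  assumes I1: "I \<ge> 1"
    and sc: "strongly_connected_digraph I E"
    and m0: "0 < m" and m1: "m < 1"
    and rs: "row_stochastic I W"
    and cp: "compatible I E m W"
    and as: "asynchrony I E T D ik d"
begin

definition "N = (D + 2) * I"
abbreviation "Wa \<equiv> Waug I E D W ik d"
abbreviation "P \<equiv> Waug_prod I E D W ik d"

lemma N_eq: "N = I + I + D * I" unfolding N_def by (simp add: algebra_simps)
lemma N_ge: "I \<le> N" "2 * I \<le> N" "1 \<le> N" using I1 unfolding N_eq by auto

lemma W_nonneg: "i \<in> {1..I} \<Longrightarrow> j \<in> {1..I} \<Longrightarrow> W i j \<ge> 0"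
  using rs unfolding row_stochastic_def by auto

lemma nbrs_sub: "in_nbrs E I i \<subseteq> {1..I}"
  unfolding in_nbrs_def by auto

lemma nbrs_fin: "finite (in_nbrs E I i)"
  using nbrs_sub finite_subset by blast

lemma ik_range: "ik k \<in> {1..I}"
  using as unfolding asynchrony_def by auto

lemma d_le: "j \<in> in_nbrs E I (ik k) \<Longrightarrow> d k j \<le> D"
  using as unfolding asynchrony_def by auto

lemma not_self_nbr: "i \<notin> in_nbrs E I i"
  using sc unfolding in_nbrs_def strongly_connected_digraph_def by auto

lemma Wa_other:
  assumes r: "r \<in> {1..N}" and c: "c \<in> {1..N}" and ne: "r \<noteq> ik k"
  shows "Wa k r c = (if c = (if r \<in> {1..2*I} - {ik k, ik k + I} then r else r - I) then 1 else 0)"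
proof -
  have i: "ik k \<in> {1..I}" by (rule ik_range)
  show ?thesis
  proof (cases "r \<in> {1..2*I} - {ik k, ik k + I}")
    case True
    then show ?thesis using r c ne unfolding Waug_def Let_def N_def by auto
  next
    case False
    then have "r \<in> {2*I+1..N} \<union> {ik k + I}" using r ne by auto
    moreover have "r - I \<noteq> r" using r I1 by auto
    ultimately show ?thesis using False r c ne unfolding Waug_def Let_def N_def by auto
  qed
qed

lemma Wa_ik:
  assumes c: "c \<in> {1..N}"
  shows "Wa k (ik k) c = (if c = ik k then W (ik k) (ik k) else 0) +
       (\<Sum>j\<in>in_nbrs E I (ik k). if c = j + (d k j + 1) * I then W (ik k) j else 0)"
  using c ik_range[of k] unfolding Waug_def Let_def N_def by auto

lemma Wa_nonneg:
  assumes r: "r \<in> {1..N}" and c: "c \<in> {1..N}"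
  shows "Wa k r c \<ge> 0"
proof (cases "r = ik k")
  case True
  have "W (ik k) (ik k) \<ge> 0" using W_nonneg ik_range by auto
  moreover have "\<forall>j\<in>in_nbrs E I (ik k). W (ik k) j \<ge> 0" using W_nonneg ik_range nbrs_sub by blast
  ultimately show ?thesis using True Wa_ik[OF c, of k]
    by (auto intro!: add_nonneg_nonneg sum_nonneg)
next
  case False
  then show ?thesis using Wa_other[OF r c False] by auto
qed

lemma W_rowsum_split:
  assumes i: "i \<in> {1..I}"
  shows "W i i + (\<Sum>j\<in>in_nbrs E I i. W i j) = 1"
proof -
  have "(\<Sum>c=1..I. W i c) = 1" using rs i unfolding row_stochastic_def by auto
  moreover have "(\<Sum>c=1..I. W i c) = (\<Sum>c\<in>insert i (in_nbrs E I i). W i c)"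
  proof (rule sum.mono_neutral_right)
    show "finite {1..I}" by simp
    show "insert i (in_nbrs E I i) \<subseteq> {1..I}" using i nbrs_sub by auto
    show "\<forall>c\<in>{1..I} - insert i (in_nbrs E I i). W i c = 0"
      using cp i unfolding compatible_def in_nbrs_def by auto
  qed
  moreover have "(\<Sum>c\<in>insert i (in_nbrs E I i). W i c) = W i i + (\<Sum>j\<in>in_nbrs E I i. W i j)"
    using not_self_nbr nbrs_fin by (simp add: sum.insert)
  ultimately show ?thesis by simp
qed

lemma Wa_rowsum:
  assumes r: "r \<in> {1..N}"
  shows "(\<Sum>c=1..N. Wa k r c) = 1"
proof (cases "r = ik k")
  case True
  let ?i = "ik k"
  have i: "?i \<in> {1..I}" by (rule ik_range)
  have "(\<Sum>c=1..N. Wa k r c) = (\<Sum>c=1..N. (if c = ?i then W ?i ?i else 0)) +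
       (\<Sum>c=1..N. \<Sum>j\<in>in_nbrs E I ?i. if c = j + (d k j + 1) * I then W ?i j else 0)"
    using True Wa_ik by (simp add: sum.distrib)
  also have "(\<Sum>c=1..N. (if c = ?i then W ?i ?i else 0)) = W ?i ?i"
    using i N_ge by (auto simp: sum.delta)
  also have "(\<Sum>c=1..N. \<Sum>j\<in>in_nbrs E I ?i. if c = j + (d k j + 1) * I then W ?i j else 0)
      = (\<Sum>j\<in>in_nbrs E I ?i. \<Sum>c=1..N. if c = j + (d k j + 1) * I then W ?i j else 0)"
    by (rule sum.swap)
  also have "\<dots> = (\<Sum>j\<in>in_nbrs E I ?i. W ?i j)"
  proof (rule sum.cong[OF refl])
    fix j assume j: "j \<in> in_nbrs E I ?i"
    have "d k j \<le> D" using d_le j by blast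
    moreover have "j \<le> I" "1 \<le> j" using j nbrs_sub[of "ik k"] by auto
    ultimately have "j + (d k j + 1) * I \<le> I + (D + 1) * I"
      by (intro add_mono mult_right_mono) auto
    then have "j + (d k j + 1) * I \<in> {1..N}" using \<open>1 \<le> j\<close> by (auto simp: N_def algebra_simps)
    then show "(\<Sum>c=1..N. if c = j + (d k j + 1) * I then W ?i j else 0) = W ?i j"
      by (simp add: sum.delta')
  qed
  finally show ?thesis using W_rowsum_split[OF i] by simp
next
  case False
  let ?t = "(if r \<in> {1..2*I} - {ik k, ik k + I} then r else r - I)"
  have "?t \<in> {1..N}"
  proof (cases "r \<in> {1..2*I} - {ik k, ik k + I}")
    case True then show ?thesis using r by auto
  next
    case F: False
    then have "r > I" using r False ik_range[of k] by auto
    then show ?thesis using F r by auto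
  qed
  then have "(\<Sum>c=1..N. Wa k r c) = (\<Sum>c=1..N. if c = ?t then 1 else 0)"
    using Wa_other[OF r _ False] by (intro sum.cong) auto
  also have "\<dots> = 1" using \<open>?t \<in> {1..N}\<close> by (simp add: sum.delta')
  finally show ?thesis .
qed

lemma Wa_rs: "row_stochastic N (Wa k)"
  unfolding row_stochastic_def using Wa_nonneg Wa_rowsum by auto

end

lemma mmult_assoc: "mmult n (mmult n A B) C = mmult n A (mmult n B C)"
proof (intro ext)
  fix r c
  have "mmult n (mmult n A B) C r c = (\<Sum>l=1..n. (\<Sum>q=1..n. A r q * B q l) * C l c)"
    unfolding mmult_def by simp
  also have "\<dots> = (\<Sum>l=1..n. \<Sum>q=1..n. A r q * B q l * C l c)"
    by (simp add: sum_distrib_right)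
  also have "\<dots> = (\<Sum>q=1..n. \<Sum>l=1..n. A r q * B q l * C l c)"
    by (rule sum.swap)
  also have "\<dots> = (\<Sum>q=1..n. A r q * (\<Sum>l=1..n. B q l * C l c))"
    by (simp add: sum_distrib_left mult.assoc)
  also have "\<dots> = mmult n A (mmult n B C) r c" unfolding mmult_def by simp
  finally show "mmult n (mmult n A B) C r c = mmult n A (mmult n B C) r c" .
qed

lemma rs_mmult:
  assumes A: "row_stochastic n A" and B: "row_stochastic n B"
  shows "row_stochastic n (mmult n A B)"
  unfolding row_stochastic_def
proof (intro conjI ballI)
  fix r c assume r: "r \<in> {1..n}" and c: "c \<in> {1..n}"
  show "0 \<le> mmult n A B r c" unfolding mmult_def
    using A B r c unfolding row_stochastic_def by (auto intro!: sum_nonneg)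
next
  fix r assume r: "r \<in> {1..n}"
  have "(\<Sum>c=1..n. mmult n A B r c) = (\<Sum>c=1..n. \<Sum>l=1..n. A r l * B l c)"
    unfolding mmult_def by simp
  also have "\<dots> = (\<Sum>l=1..n. \<Sum>c=1..n. A r l * B l c)" by (rule sum.swap)
  also have "\<dots> = (\<Sum>l=1..n. A r l * (\<Sum>c=1..n. B l c))" by (simp add: sum_distrib_left)
  also have "\<dots> = (\<Sum>l=1..n. A r l)"
    using B unfolding row_stochastic_def by (intro sum.cong) auto
  also have "\<dots> = 1" using A r unfolding row_stochastic_def by auto
  finally show "(\<Sum>c=1..n. mmult n A B r c) = 1" .
qed

lemma mmult_upper:
  assumes B: "row_stochastic n B" and r: "r \<in> {1..n}"
    and hi: "\<And>l. l \<in> {1..n} \<Longrightarrow> A l c \<le> hi"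
    and lq: "lq \<in> {1..n}" and eta: "B r lq \<ge> \<eta>" "\<eta> \<ge> 0"
  shows "mmult n B A r c \<le> hi - \<eta> * (hi - A lq c)"
proof -
  have Bn: "\<And>l. l \<in> {1..n} \<Longrightarrow> B r l \<ge> 0" using B r unfolding row_stochastic_def by auto
  have Bs: "(\<Sum>l=1..n. B r l) = 1" using B r unfolding row_stochastic_def by auto
  have "\<eta> * (hi - A lq c) \<le> B r lq * (hi - A lq c)"
    using eta hi[OF lq] by (intro mult_right_mono) auto
  also have "\<dots> \<le> (\<Sum>l=1..n. B r l * (hi - A l c))"
    using lq Bn hi by (intro member_le_sum) auto
  also have "\<dots> = hi * (\<Sum>l=1..n. B r l) - (\<Sum>l=1..n. B r l * A l c)"
    by (simp add: sum_distrib_left algebra_simps sum_subtractf)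
  also have "\<dots> = hi - mmult n B A r c" using Bs unfolding mmult_def by simp
  finally show ?thesis by simp
qed

lemma mmult_lower:
  assumes B: "row_stochastic n B" and r: "r \<in> {1..n}"
    and lo: "\<And>l. l \<in> {1..n} \<Longrightarrow> lo \<le> A l c"
    and lq: "lq \<in> {1..n}" and eta: "B r lq \<ge> \<eta>" "\<eta> \<ge> 0"
  shows "mmult n B A r c \<ge> lo + \<eta> * (A lq c - lo)"
proof -
  have Bn: "\<And>l. l \<in> {1..n} \<Longrightarrow> B r l \<ge> 0" using B r unfolding row_stochastic_def by auto
  have Bs: "(\<Sum>l=1..n. B r l) = 1" using B r unfolding row_stochastic_def by auto
  have "\<eta> * (A lq c - lo) \<le> B r lq * (A lq c - lo)"
    using eta lo[OF lq] by (intro mult_right_mono) auto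
  also have "\<dots> \<le> (\<Sum>l=1..n. B r l * (A l c - lo))"
    using lq Bn lo by (intro member_le_sum) auto
  also have "\<dots> = (\<Sum>l=1..n. B r l * A l c) - lo * (\<Sum>l=1..n. B r l)"
    by (simp add: sum_distrib_left algebra_simps sum_subtractf)
  also have "\<dots> = mmult n B A r c - lo" using Bs unfolding mmult_def by simp
  finally show ?thesis by simp
qed

definition Mx :: "nat \<Rightarrow> (nat \<Rightarrow> nat \<Rightarrow> real) \<Rightarrow> nat \<Rightarrow> real" where
  "Mx n A c = Max ((\<lambda>r. A r c) ` {1..n})"
definition Mn :: "nat \<Rightarrow> (nat \<Rightarrow> nat \<Rightarrow> real) \<Rightarrow> nat \<Rightarrow> real" where
  "Mn n A c = Min ((\<lambda>r. A r c) ` {1..n})"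

lemma Mx_ge: "r \<in> {1..n} \<Longrightarrow> A r c \<le> Mx n A c"
  unfolding Mx_def by (rule Max_ge) auto
lemma Mn_le: "r \<in> {1..n} \<Longrightarrow> Mn n A c \<le> A r c"
  unfolding Mn_def by (rule Min_le) auto
lemma Mx_in: "n \<ge> 1 \<Longrightarrow> \<exists>r\<in>{1..n}. Mx n A c = A r c"
proof -
  assume "n \<ge> 1"
  then have "Mx n A c \<in> (\<lambda>r. A r c) ` {1..n}" unfolding Mx_def by (intro Max_in) auto
  then show ?thesis by auto
qed
lemma Mn_in: "n \<ge> 1 \<Longrightarrow> \<exists>r\<in>{1..n}. Mn n A c = A r c"
proof -
  assume "n \<ge> 1"
  then have "Mn n A c \<in> (\<lambda>r. A r c) ` {1..n}" unfolding Mn_def by (intro Min_in) auto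
  then show ?thesis by auto
qed

lemma Mx_mmult:
  assumes "n \<ge> 1" "row_stochastic n B"
  shows "Mx n (mmult n B A) c \<le> Mx n A c"
proof -
  obtain r where r: "r \<in> {1..n}" "Mx n (mmult n B A) c = mmult n B A r c" using Mx_in assms by blast
  have "mmult n B A r c \<le> Mx n A c - 0 * (Mx n A c - A 1 c)"
    using assms r by (intro mmult_upper[where lq=1]) (auto simp: Mx_ge row_stochastic_def)
  then show ?thesis using r by simp
qed

lemma Mn_mmult:
  assumes "n \<ge> 1" "row_stochastic n B"
  shows "Mn n A c \<le> Mn n (mmult n B A) c"
proof -
  obtain r where r: "r \<in> {1..n}" "Mn n (mmult n B A) c = mmult n B A r c" using Mn_in assms by blast
  have "mmult n B A r c \<ge> Mn n A c + 0 * (A 1 c - Mn n A c)"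
    using assms r by (intro mmult_lower[where lq=1]) (auto simp: Mn_le row_stochastic_def)
  then show ?thesis using r by simp
qed

lemma spread_mmult:
  assumes "n \<ge> 1" "row_stochastic n B" and eta: "\<eta> \<ge> 0" "\<And>r. r \<in> {1..n} \<Longrightarrow> B r 1 \<ge> \<eta>"
  shows "Mx n (mmult n B A) c - Mn n (mmult n B A) c \<le> (1 - \<eta>) * (Mx n A c - Mn n A c)"
proof -
  obtain r where r: "r \<in> {1..n}" "Mx n (mmult n B A) c = mmult n B A r c" using Mx_in assms by blast
  obtain r' where r': "r' \<in> {1..n}" "Mn n (mmult n B A) c = mmult n B A r' c" using Mn_in assms by blast
  have 1: "mmult n B A r c \<le> Mx n A c - \<eta> * (Mx n A c - A 1 c)"
    using assms r by (intro mmult_upper[where lq=1]) (auto simp: Mx_ge)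
  have 2: "mmult n B A r' c \<ge> Mn n A c + \<eta> * (A 1 c - Mn n A c)"
    using assms r' by (intro mmult_lower[where lq=1]) (auto simp: Mn_le)
  show ?thesis using 1 2 r r' by (simp add: algebra_simps)
qed

context L5 begin

lemma P_0: "P t 0 = Wa t" by simp
lemma P_Suc: "P t (Suc n) = mmult N (Wa (t + Suc n)) (P t n)" by (simp add: N_def)
declare Waug_prod.simps[simp del]

lemma P_rs: "row_stochastic N (P t n)"
  by (induction n) (auto intro: rs_mmult Wa_rs simp: P_0 P_Suc)

lemma P_nonneg: "r \<in> {1..N} \<Longrightarrow> c \<in> {1..N} \<Longrightarrow> P t n r c \<ge> 0"
  using P_rs unfolding row_stochastic_def by auto

lemma P_split: "P t (Suc a + b) = mmult N (P (t + Suc a) b) (P t a)"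
proof (induction b)
  case 0 then show ?case by (simp add: P_Suc P_0)
next
  case (Suc b)
  have "P t (Suc a + Suc b) = mmult N (Wa (t + Suc (Suc a + b))) (P t (Suc a + b))" by (simp only: P_Suc add_Suc_right)
  also have "\<dots> = mmult N (Wa (t + Suc a + Suc b)) (mmult N (P (t + Suc a) b) (P t a))"
    using Suc by (simp add: add.assoc)
  also have "\<dots> = mmult N (P (t + Suc a) (Suc b)) (P t a)" by (simp add: mmult_assoc P_Suc)
  finally show ?case .
qed

inductive reach :: "nat \<Rightarrow> nat \<Rightarrow> nat \<Rightarrow> nat \<Rightarrow> bool" where
  rrefl: "r \<in> {1..N} \<Longrightarrow> reach a a r r"
| rstep: "reach a b l c \<Longrightarrow> r \<in> {1..N} \<Longrightarrow> Wa b r l \<ge> m \<Longrightarrow> reach a (Suc b) r c"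

lemma reach_le: "reach a b r c \<Longrightarrow> a \<le> b \<and> r \<in> {1..N} \<and> c \<in> {1..N}"
  by (induction rule: reach.induct) auto

lemma reach_same0: "reach a b l c \<Longrightarrow> a = b \<Longrightarrow> l = c"
  by (induction rule: reach.induct) (auto dest: reach_le)
lemma reach_same: "reach a a l c \<Longrightarrow> l = c"
  using reach_same0 by blast

lemma reach_P: "reach a b r c \<Longrightarrow> a < b \<Longrightarrow> P a (b - a - 1) r c \<ge> m ^ (b - a)"
proof (induction rule: reach.induct)
  case (rrefl r a) then show ?case by simp
next
  case (rstep a b l c r)
  show ?case
  proof (cases "a = b")
    case True
    then have "l = c" using rstep.hyps(1) reach_same by blast
    then show ?thesis using True rstep by (simp add: P_0)
  next
    case False
    then have ab: "a < b" using reach_le[OF rstep.hyps(1)] by auto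
    have l: "l \<in> {1..N}" and c: "c \<in> {1..N}" using reach_le[OF rstep.hyps(1)] by auto
    have e: "Suc b - a - 1 = Suc (b - a - 1)" "a + Suc (b - a - 1) = b" using ab by auto
    have "P a (Suc b - a - 1) r c = (\<Sum>q=1..N. Wa b r q * P a (b - a - 1) q c)"
      unfolding e P_Suc by (simp add: e mmult_def)
    also have "\<dots> \<ge> Wa b r l * P a (b - a - 1) l c"
      using l rstep.hyps(2) c
      by (intro member_le_sum) (auto intro!: mult_nonneg_nonneg Wa_nonneg P_nonneg)
    moreover have "Wa b r l * P a (b - a - 1) l c \<ge> m * m ^ (b - a)"
      using rstep.IH[OF ab] rstep.hyps(3) m0 by (intro mult_mono) auto
    moreover have "m * m ^ (b - a) = m ^ (Suc b - a)" using ab by (simp add: Suc_diff_le)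
    ultimately show ?thesis by simp
  qed
qed

lemma reach_trans: "reach b e r l \<Longrightarrow> reach a b l c \<Longrightarrow> reach a e r c"
proof (induction rule: reach.induct)
  case (rrefl r a) then show ?case by simp
next
  case (rstep b e l' l r)
  then show ?case by (auto intro: reach.rstep)
qed

lemma Wa_diag_x: assumes c: "c \<in> {1..I}" shows "Wa s c c \<ge> m"
proof (cases "c = ik s")
  case True
  have cN: "c \<in> {1..N}" using c N_ge by auto
  have nz: "\<forall>j\<in>in_nbrs E I (ik s). c \<noteq> j + (d s j + 1) * I"
  proof
    fix j assume "j \<in> in_nbrs E I (ik s)"
    then have "j \<ge> 1" using nbrs_sub[of "ik s"] by auto
    moreover have "(d s j + 1) * I \<ge> I" by simp
    ultimately show "c \<noteq> j + (d s j + 1) * I" using c by auto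
  qed
  have "Wa s c c = W c c"
    using Wa_ik[OF cN, of s] nz unfolding True[symmetric] by simp
  then show ?thesis using cp c unfolding compatible_def by auto
next
  case False
  have "c \<in> {1..N}" using c N_ge by auto
  then show ?thesis using Wa_other[of c c s] False c m1 ik_range[of s] by auto
qed

lemma self_reach: "c \<in> {1..I} \<Longrightarrow> a \<le> b \<Longrightarrow> reach a b c c"
proof (induction b)
  case 0 then show ?case using N_ge by (auto intro: rrefl)
next
  case (Suc b)
  show ?case
  proof (cases "a = Suc b")
    case True then show ?thesis using Suc N_ge by (auto intro: rrefl)
  next
    case False
    then have "reach a b c c" using Suc by auto
    moreover have "c \<in> {1..N}" using Suc N_ge by auto
    ultimately show ?thesis using Wa_diag_x[OF Suc(2)] by (intro rstep)
  qed
qed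

end

context L5 begin

lemma Wa_v_self: "j \<in> {1..I} \<Longrightarrow> ik s \<noteq> j \<Longrightarrow> Wa s (j + I) (j + I) = 1"
  using Wa_other[of "j + I" "j + I" s] N_ge ik_range[of s] by auto

lemma Wa_v_x: "j \<in> {1..I} \<Longrightarrow> ik s = j \<Longrightarrow> Wa s (j + I) j = 1"
  using Wa_other[of "j + I" j s] N_ge ik_range[of s] I1 by auto

lemma Wa_shift: "r \<in> {2*I+1..N} \<Longrightarrow> Wa s r (r - I) = 1"
proof -
  assume r: "r \<in> {2*I+1..N}"
  then have "r - I \<in> {1..N}" by auto
  then show ?thesis using Wa_other[of r "r - I" s] r N_ge ik_range[of s] I1 by auto
qed

lemma vwait: "j \<in> {1..I} \<Longrightarrow> (\<exists>s\<in>{a..<b}. ik s = j) \<Longrightarrow> reach a b (j + I) j"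
proof (induction b)
  case 0 then show ?case by auto
next
  case (Suc b)
  have jN: "j + I \<in> {1..N}" using Suc.prems N_ge by auto
  show ?case
  proof (cases "ik b = j")
    case True
    then obtain s where "s \<in> {a..<Suc b}" using Suc.prems by auto
    then have "a \<le> b" by auto
    then have "reach a b j j" using self_reach Suc.prems by auto
    then show ?thesis using Wa_v_x[OF Suc.prems(1) True] m1 jN by (intro rstep) auto
  next
    case False
    then have "\<exists>s\<in>{a..<b}. ik s = j" using Suc.prems(2) less_Suc_eq by auto
    then have "reach a b (j + I) (j)" using Suc by auto
    then show ?thesis using Wa_v_self[OF Suc.prems(1) False] m1 jN by (intro rstep) auto
  qed
qed

lemma shift_many: "j \<in> {1..I} \<Longrightarrow> dd \<le> D \<Longrightarrow> reach a b (j + I) c \<Longrightarrow> reach a (b + dd) (j + (dd + 1) * I) c"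
proof (induction dd)
  case 0 then show ?case by simp
next
  case (Suc dd)
  have r: "j + (Suc dd + 1) * I \<in> {2*I+1..N}"
  proof -
    have "(Suc dd + 1) * I \<le> (D + 1) * I" using Suc.prems by (intro mult_right_mono) auto
    then have "j + (Suc dd + 1) * I \<le> I + (D + 1) * I" using Suc.prems(1) by (intro add_mono) auto
    then show ?thesis using Suc.prems(1) by (auto simp: N_def algebra_simps)
  qed
  have e: "j + (Suc dd + 1) * I - I = j + (dd + 1) * I" by simp
  have "reach a (b + dd) (j + (dd + 1) * I) c" using Suc by auto
  then show ?case using Wa_shift[OF r, of "b + dd"] m1 r unfolding e by (auto intro: rstep)
qed

lemma nbr_col_inj:
  assumes "j \<in> {1..I}" "j' \<in> {1..I}" "j' + x * I = j + y * I"
  shows "j' = j"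
proof (cases x y rule: linorder_cases)
  case less
  then obtain e where "y = x + Suc e" using less_iff_Suc_add by auto
  then have "j' = j + Suc e * I" using assms(3) by (simp add: algebra_simps)
  then show ?thesis using assms by auto
next
  case equal then show ?thesis using assms by simp
next
  case greater
  then obtain e where "x = y + Suc e" using less_iff_Suc_add by auto
  then have "j = j' + Suc e * I" using assms(3) by (simp add: algebra_simps)
  then show ?thesis using assms by auto
qed

lemma Wa_edge:
  assumes j: "j \<in> in_nbrs E I (ik s)"
  shows "Wa s (ik s) (j + (d s j + 1) * I) \<ge> m"
proof -
  let ?i = "ik s"
  have jI: "j \<in> {1..I}" using j nbrs_sub by blast
  have "d s j \<le> D" using d_le j by blast
  then have "j + (d s j + 1) * I \<le> I + (D + 1) * I" using jI by (intro add_mono mult_right_mono) auto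
  then have cN: "j + (d s j + 1) * I \<in> {1..N}" using jI by (auto simp: N_def algebra_simps)
  have ne: "j + (d s j + 1) * I \<noteq> ?i" using ik_range[of s] jI by auto
  have "(\<Sum>j'\<in>in_nbrs E I ?i. if j + (d s j + 1) * I = j' + (d s j' + 1) * I then W ?i j' else 0)
      = (\<Sum>j'\<in>in_nbrs E I ?i. if j' = j then W ?i j' else 0)"
  proof (rule sum.cong[OF refl])
    fix j' assume "j' \<in> in_nbrs E I ?i"
    then have "j' \<in> {1..I}" using nbrs_sub by blast
    then show "(if j + (d s j + 1) * I = j' + (d s j' + 1) * I then W ?i j' else 0) =
          (if j' = j then W ?i j' else 0)"
      using nbr_col_inj[of j' j "d s j + 1" "d s j' + 1"] jI by auto
  qed
  also have "\<dots> = W ?i j" using j nbrs_fin by (simp add: sum.delta')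
  finally have "Wa s ?i (j + (d s j + 1) * I) = W ?i j" using Wa_ik[OF cN, of s] ne by simp
  moreover have "W ?i j \<ge> m" using cp j ik_range[of s] unfolding compatible_def in_nbrs_def by auto
  ultimately show ?thesis by simp
qed

lemma async_win: "i \<in> {1..I} \<Longrightarrow> \<exists>s\<in>{k..<k+T}. ik s = i"
  using as unfolding asynchrony_def by auto

lemma T_pos: "T \<ge> 1"
  using async_win[of 1 0] I1 by auto

lemma hop:
  assumes E: "(j, i) \<in> E" and i: "i \<in> {1..I}" and jI: "j \<in> {1..I}" and ab: "a + (2 * T + D) \<le> b"
  shows "reach a b i j"
proof -
  obtain s where s: "s \<in> {b - T..<b}" "ik s = i" using async_win[OF i, of "b - T"] ab by auto
  have jn: "j \<in> in_nbrs E I (ik s)" using E jI s unfolding in_nbrs_def by auto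
  define dd where "dd = d s j"
  have dD: "dd \<le> D" using d_le jn dd_def by blast
  have "s - dd - T \<ge> a" using s ab dD by auto
  then obtain s' where s': "s' \<in> {s - dd - T..<s - dd - T + T}" "ik s' = j"
    using async_win[OF jI, of "s - dd - T"] by auto
  have "s \<ge> dd + T + a" using s ab dD by auto
  then have "s' \<in> {a..<s - dd}" using s' \<open>s - dd - T \<ge> a\<close> by auto
  then have "reach a (s - dd) (j + I) j" using vwait jI s' by blast
  then have "reach a (s - dd + dd) (j + (dd + 1) * I) j" using shift_many jI dD by blast
  moreover have "s - dd + dd = s" using s ab dD by auto
  ultimately have "reach a s (j + (dd + 1) * I) j" by simp
  then have "reach a (Suc s) i j"
    using Wa_edge[OF jn] s i N_ge unfolding dd_def by (auto intro: rstep)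
  moreover have "reach (Suc s) b i i" using self_reach i s by auto
  ultimately show ?thesis using reach_trans by blast
qed

lemma path_reach:
  "(c, r) \<in> E ^^ n \<Longrightarrow> c \<in> {1..I} \<Longrightarrow> a + n * (2 * T + D) \<le> b \<Longrightarrow> reach a b r c"
proof (induction n arbitrary: r b)
  case 0 then show ?case using self_reach by auto
next
  case (Suc n)
  then obtain y where y: "(c, y) \<in> E ^^ n" "(y, r) \<in> E" by auto
  have EI: "E \<subseteq> {1..I} \<times> {1..I}" using sc unfolding strongly_connected_digraph_def by auto
  have yI: "y \<in> {1..I}" "r \<in> {1..I}" using y EI by auto
  have "reach a (b - (2 * T + D)) y c" using Suc.IH[OF y(1) Suc.prems(2)] Suc.prems(3) by auto
  moreover have "reach (b - (2 * T + D)) b r y" using hop[OF y(2) yI(2) yI(1)] Suc.prems(3) by auto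
  ultimately show ?case using reach_trans by blast
qed

end

lemma short_path:
  assumes EA: "E \<subseteq> A \<times> A" and fin: "finite A" and xy: "(x, y) \<in> E\<^sup>*" and x: "x \<in> A"
  shows "\<exists>n. n < card A \<and> (x, y) \<in> E ^^ n"
proof -
  obtain n0 where "(x, y) \<in> E ^^ n0" using xy rtrancl_power by blast
  define n where "n = (LEAST n. (x, y) \<in> E ^^ n)"
  have n: "(x, y) \<in> E ^^ n" unfolding n_def by (rule LeastI) fact
  have nmin: "\<And>n'. (x, y) \<in> E ^^ n' \<Longrightarrow> n \<le> n'" unfolding n_def by (rule Least_le)
  have "n < card A"
  proof (rule ccontr)
    assume "\<not> n < card A"
    then have ge: "card A < card {0..n}" by simp
    obtain f where f: "f 0 = x" "f n = y" "\<And>i. i < n \<Longrightarrow> (f i, f (Suc i)) \<in> E"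
      using n unfolding relpow_fun_conv by blast
    have fA: "f ` {0..n} \<subseteq> A"
    proof
      fix z assume "z \<in> f ` {0..n}"
      then obtain i where i: "i \<le> n" "z = f i" by auto
      show "z \<in> A"
      proof (cases i)
        case 0 then show ?thesis using i f x by simp
      next
        case (Suc i') then show ?thesis using i f(3)[of i'] EA by auto
      qed
    qed
    have "\<not> inj_on f {0..n}"
      using card_inj_on_le[OF _ fA fin] ge by auto
    then obtain i j where ij: "i \<le> n" "j \<le> n" "i \<noteq> j" "f i = f j"
      unfolding inj_on_def by auto
    then obtain i j where ij: "i < j" "j \<le> n" "f i = f j"
      by (metis linorder_neqE_nat order.strict_trans1 order.order_iff_strict)
    define g where "g k = (if k < i then f k else f (k + (j - i)))" for k
    have "(x, y) \<in> E ^^ (n - (j - i))"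
      unfolding relpow_fun_conv
    proof (intro exI conjI allI impI)
      show "g 0 = x" using f ij unfolding g_def by auto
      show "g (n - (j - i)) = y" using f ij unfolding g_def by auto
      fix k assume k: "k < n - (j - i)"
      show "(g k, g (Suc k)) \<in> E"
      proof (cases "Suc k < i")
        case True then show ?thesis using f(3)[of k] ij unfolding g_def by auto
      next
        case False
        show ?thesis
        proof (cases "k < i")
          case True
          then have "Suc k = i" using False by auto
          then show ?thesis using f(3)[of k] ij True unfolding g_def by auto
        next
          case False
          then show ?thesis using f(3)[of "k + (j - i)"] ij k unfolding g_def by auto
        qed
      qed
    qed
    then have "n \<le> n - (j - i)" by (rule nmin)
    then show False using ij by auto
  qed
  then show ?thesis using n by blast
qed

context L5 begin

lemma start_reach:
  assumes r: "r \<in> {1..N}" and ab: "a + D + T \<le> b"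
  shows "\<exists>j\<in>{1..I}. reach a b r j"
proof -
  define q where "q = (r - 1) div I"
  define j where "j = (r - 1) mod I + 1"
  have jI: "j \<in> {1..I}" unfolding j_def using I1 by (auto simp: Suc_le_eq)
  have rq: "r = j + q * I" unfolding j_def q_def using r
    by (metis add.commute add_diff_inverse_nat atLeastAtMost_iff div_mult_mod_eq group_cancel.add1 less_one not_le)
  have "r - 1 < (D + 2) * I" using r by (auto simp: N_def)
  then have qD: "q < D + 2" unfolding q_def by (metis less_mult_imp_div_less)
  show ?thesis
  proof (cases q)
    case 0
    then have "r = j" using rq by simp
    moreover have "reach a b j j" using self_reach jI ab by auto
    ultimately show ?thesis using jI by blast
  next
    case (Suc dd)
    then have dD: "dd \<le> D" using qD by auto
    obtain s' where s': "s' \<in> {b - dd - T..<b - dd - T + T}" "ik s' = j"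
      using async_win[OF jI, of "b - dd - T"] by auto
    then have "s' \<in> {a..<b - dd}" using ab dD by auto
    then have "reach a (b - dd) (j + I) j" using vwait jI s' by blast
    then have "reach a (b - dd + dd) (j + (dd + 1) * I) j" using shift_many jI dD by blast
    moreover have "b - dd + dd = b" using ab dD by auto
    ultimately show ?thesis using rq Suc jI by auto
  qed
qed

lemma K1_eq: "K1 I T D = T + D + (I - 1) * (2 * T + D)"
proof -
  obtain i' where "I = Suc i'" using I1 by (cases I) auto
  then show ?thesis unfolding K1_def by (simp add: algebra_simps)
qed

lemma part_b:
  assumes r: "r \<in> {1..N}" and c: "c \<in> {1..I}"
  shows "P k (K1 I T D - 1) r c \<ge> m ^ K1 I T D"
proof -
  let ?L = "2 * T + D"
  let ?b = "k + K1 I T D"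
  let ?mid = "k + (I - 1) * ?L"
  obtain j where j: "j \<in> {1..I}" "reach ?mid ?b r j"
    using start_reach[OF r, of ?mid ?b] K1_eq by auto
  have EI: "E \<subseteq> {1..I} \<times> {1..I}" using sc unfolding strongly_connected_digraph_def by auto
  have "(c, j) \<in> E\<^sup>*" using sc c j unfolding strongly_connected_digraph_def by auto
  then obtain n where n: "n < card {1..I}" "(c, j) \<in> E ^^ n"
    using short_path[OF EI _ _ c] by auto
  have "n * ?L \<le> (I - 1) * ?L" using n by (intro mult_right_mono) auto
  then have "reach k ?mid j c" using path_reach[OF n(2) c] by auto
  then have R: "reach k ?b r c" using j reach_trans by blast
  have "K1 I T D \<ge> 1" using K1_eq T_pos by auto
  then have "P k (?b - k - 1) r c \<ge> m ^ (?b - k)" using reach_P[OF R] by auto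
  then show ?thesis by simp
qed

end

context L5 begin

abbreviation "KK \<equiv> K1 I T D"
abbreviation "eta \<equiv> m ^ KK"
abbreviation "Sp t n c \<equiv> Mx N (P t n) c - Mn N (P t n) c"

lemma KK_pos: "KK \<ge> 1" using K1_eq T_pos by auto

lemma eta_pos: "0 < eta" "eta < 1"
  using m0 m1 KK_pos by (auto intro: power_Suc_less_one power_less_one_iff[THEN iffD2] simp: power_less_one_iff)

lemma P_le1: "r \<in> {1..N} \<Longrightarrow> c \<in> {1..N} \<Longrightarrow> P t n r c \<le> 1"
proof -
  assume r: "r \<in> {1..N}" and c: "c \<in> {1..N}"
  have "P t n r c \<le> (\<Sum>q=1..N. P t n r q)"
    using c r P_nonneg by (intro member_le_sum) auto
  also have "\<dots> = 1" using P_rs r unfolding row_stochastic_def by auto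
  finally show ?thesis .
qed

lemma Mx_dec: "n \<le> n' \<Longrightarrow> Mx N (P t n') c \<le> Mx N (P t n) c"
proof (rule lift_Suc_antimono_le[of "\<lambda>n. Mx N (P t n) c"])
  fix n show "Mx N (P t (Suc n)) c \<le> Mx N (P t n) c"
    unfolding P_Suc using Mx_mmult N_ge Wa_rs by blast
qed

lemma Mn_inc: "n \<le> n' \<Longrightarrow> Mn N (P t n) c \<le> Mn N (P t n') c"
proof (rule lift_Suc_mono_le[of "\<lambda>n. Mn N (P t n) c"])
  fix n show "Mn N (P t n) c \<le> Mn N (P t (Suc n)) c"
    unfolding P_Suc using Mn_mmult N_ge Wa_rs by blast
qed

lemma Mn_le_Mx: "Mn N (P t n) c \<le> Mx N (P t n') c"
proof -
  let ?M = "max n n'"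
  have "Mn N (P t n) c \<le> Mn N (P t ?M) c" by (rule Mn_inc) auto
  also have "\<dots> \<le> P t ?M 1 c" using N_ge by (intro Mn_le) auto
  also have "\<dots> \<le> Mx N (P t ?M) c" using N_ge by (intro Mx_ge) auto
  also have "\<dots> \<le> Mx N (P t n') c" by (rule Mx_dec) auto
  finally show ?thesis .
qed

lemma Sp_le1: "c \<in> {1..N} \<Longrightarrow> Sp t n c \<le> 1"
proof -
  assume c: "c \<in> {1..N}"
  obtain r where r: "r \<in> {1..N}" "Mx N (P t n) c = P t n r c" using Mx_in N_ge by blast
  obtain r' where r': "r' \<in> {1..N}" "Mn N (P t n) c = P t n r' c" using Mn_in N_ge by blast
  show ?thesis using r r' P_le1[OF r(1) c, of t n] P_nonneg[OF r'(1) c, of t n] by simp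
qed

lemma Sp_contr: "q * KK \<le> n \<Longrightarrow> c \<in> {1..N} \<Longrightarrow> Sp t n c \<le> (1 - eta) ^ q"
proof (induction q arbitrary: n)
  case 0 then show ?case using Sp_le1 by simp
next
  case (Suc q)
  define a where "a = n - KK"
  have n: "n = Suc a + (KK - 1)" using Suc.prems KK_pos unfolding a_def by auto
  have "q * KK \<le> a" using Suc.prems KK_pos unfolding a_def by auto
  then have IH: "Sp t a c \<le> (1 - eta) ^ q" using Suc.prems by (intro Suc.IH) auto
  have B: "row_stochastic N (P (t + Suc a) (KK - 1))" by (rule P_rs)
  have Bc: "\<And>r. r \<in> {1..N} \<Longrightarrow> P (t + Suc a) (KK - 1) r 1 \<ge> eta"
    using part_b I1 by auto
  have "Sp t n c \<le> (1 - eta) * Sp t a c"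
    unfolding n P_split using spread_mmult[OF N_ge(3) B _ Bc] eta_pos by auto
  also have "\<dots> \<le> (1 - eta) * (1 - eta) ^ q" using IH eta_pos by (intro mult_left_mono) auto
  finally show ?case by simp
qed

definition psi :: "nat \<Rightarrow> nat \<Rightarrow> real" where
  "psi t c = Sup (range (\<lambda>n. Mn N (P t n) c))"

lemma psi_bounds: "Mn N (P t n) c \<le> psi t c" "psi t c \<le> Mx N (P t n) c"
proof -
  have bdd: "bdd_above (range (\<lambda>n. Mn N (P t n) c))"
    using Mn_le_Mx by (intro bdd_aboveI[where M="Mx N (P t 0) c"]) auto
  show "Mn N (P t n) c \<le> psi t c" unfolding psi_def by (rule cSup_upper[OF _ bdd]) auto
  show "psi t c \<le> Mx N (P t n) c" unfolding psi_def by (rule cSup_least) (auto intro: Mn_le_Mx)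
qed

lemma psi_close: "r \<in> {1..N} \<Longrightarrow> \<bar>P t n r c - psi t c\<bar> \<le> Sp t n c"
  using psi_bounds(1)[of t n c] psi_bounds(2)[of t c n] Mx_ge[of r N "P t n" c] Mn_le[of r N "P t n" c] by auto

lemma psi_nonneg: "c \<in> {1..N} \<Longrightarrow> psi t c \<ge> 0"
proof -
  assume c: "c \<in> {1..N}"
  obtain r' where r': "r' \<in> {1..N}" "Mn N (P t 0) c = P t 0 r' c" using Mn_in N_ge by blast
  then show ?thesis using psi_bounds(1)[of t 0 c] P_nonneg[OF r'(1) c, of t 0] by auto
qed

lemma psi_eta: "i \<in> {1..I} \<Longrightarrow> psi t i \<ge> eta"
proof -
  assume i: "i \<in> {1..I}"
  obtain r' where r': "r' \<in> {1..N}" "Mn N (P t (KK - 1)) i = P t (KK - 1) r' i" using Mn_in N_ge by blast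
  then show ?thesis using psi_bounds(1)[of t "KK - 1" i] part_b[OF r'(1) i, of t] by auto
qed

lemma psi_sum: "(\<Sum>c=1..N. psi t c) = 1"
proof (rule ccontr)
  let ?S = "(\<Sum>c=1..N. psi t c)"
  assume ne: "?S \<noteq> 1"
  have bnd: "\<bar>?S - 1\<bar> \<le> real N * (1 - eta) ^ q" for q
  proof -
    let ?n = "q * KK"
    have "(\<Sum>c=1..N. P t ?n 1 c) = 1" using P_rs N_ge unfolding row_stochastic_def by auto
    then have "\<bar>?S - 1\<bar> = \<bar>\<Sum>c=1..N. (psi t c - P t ?n 1 c)\<bar>" by (simp add: sum_subtractf)
    also have "\<dots> \<le> (\<Sum>c=1..N. \<bar>psi t c - P t ?n 1 c\<bar>)" by (rule sum_abs)
    also have "\<dots> \<le> (\<Sum>c=1..N. (1 - eta) ^ q)"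
    proof (rule sum_mono)
      fix c assume c: "c \<in> {1..N}"
      have "\<bar>psi t c - P t ?n 1 c\<bar> \<le> Sp t ?n c" using psi_close[of 1 t ?n c] N_ge by auto
      also have "\<dots> \<le> (1 - eta) ^ q" using Sp_contr c by auto
      finally show "\<bar>psi t c - P t ?n 1 c\<bar> \<le> (1 - eta) ^ q" .
    qed
    also have "\<dots> = real N * (1 - eta) ^ q" by simp
    finally show ?thesis .
  qed
  have "\<bar>?S - 1\<bar> / real N > 0" using ne N_ge by auto
  then obtain q where "(1 - eta) ^ q < \<bar>?S - 1\<bar> / real N"
    using real_arch_pow_inv[of "\<bar>?S - 1\<bar> / real N" "1 - eta"] eta_pos by auto
  then have "real N * (1 - eta) ^ q < \<bar>?S - 1\<bar>" using N_ge by (simp add: field_simps)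
  then show False using bnd[of q] by simp
qed

end

lemma spec_norm_bound:
  assumes e: "\<epsilon> \<ge> 0" and A: "\<And>r c. r \<in> {1..n} \<Longrightarrow> c \<in> {1..n} \<Longrightarrow> \<bar>A r c\<bar> \<le> \<epsilon>"
  shows "spec_norm n A \<le> real n * real n * \<epsilon>"
  unfolding spec_norm_def
proof (rule cSup_least)
  show "{sqrt (\<Sum>r=1..n. (\<Sum>c=1..n. A r c * x c)\<^sup>2) | x. (\<Sum>c=1..n. (x c)\<^sup>2) \<le> 1} \<noteq> {}"
  proof -
    have "sqrt (\<Sum>r=1..n. (\<Sum>c=1..n. A r c * (\<lambda>_. 0::real) c)\<^sup>2)
       \<in> {sqrt (\<Sum>r=1..n. (\<Sum>c=1..n. A r c * x c)\<^sup>2) | x. (\<Sum>c=1..n. (x c)\<^sup>2) \<le> 1}"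
      by (rule CollectI, rule exI[of _ "\<lambda>_. 0"]) simp
    then show ?thesis by (rule ex_in_conv[THEN iffD1, OF exI])
  qed
next
  fix y assume "y \<in> {sqrt (\<Sum>r=1..n. (\<Sum>c=1..n. A r c * x c)\<^sup>2) | x. (\<Sum>c=1..n. (x c)\<^sup>2) \<le> 1}"
  then obtain x where y: "y = sqrt (\<Sum>r=1..n. (\<Sum>c=1..n. A r c * x c)\<^sup>2)"
    and x: "(\<Sum>c=1..n. (x c)\<^sup>2) \<le> 1" by auto
  have x1: "\<bar>x c\<bar> \<le> 1" if c: "c \<in> {1..n}" for c
  proof -
    have "(x c)\<^sup>2 \<le> (\<Sum>c=1..n. (x c)\<^sup>2)" using c by (intro member_le_sum) auto
    then have "(x c)\<^sup>2 \<le> 1" using x by simp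
    then show ?thesis by (simp add: abs_square_le_1)
  qed
  have row: "(\<Sum>c=1..n. A r c * x c)\<^sup>2 \<le> (real n * \<epsilon>)\<^sup>2" if r: "r \<in> {1..n}" for r
  proof -
    have "\<bar>\<Sum>c=1..n. A r c * x c\<bar> \<le> (\<Sum>c=1..n. \<bar>A r c * x c\<bar>)" by (rule sum_abs)
    also have "\<dots> \<le> (\<Sum>c=1..n. \<epsilon>)"
    proof (rule sum_mono)
      fix c assume c: "c \<in> {1..n}"
      have "\<bar>A r c\<bar> * \<bar>x c\<bar> \<le> \<epsilon> * 1" using A[OF r c] x1[OF c] e by (intro mult_mono) auto
      then show "\<bar>A r c * x c\<bar> \<le> \<epsilon>" by (simp add: abs_mult)
    qed
    also have "\<dots> = real n * \<epsilon>" by simp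
    finally have "\<bar>\<Sum>c=1..n. A r c * x c\<bar> \<le> real n * \<epsilon>" .
    then have "\<bar>\<Sum>c=1..n. A r c * x c\<bar> ^ 2 \<le> (real n * \<epsilon>) ^ 2"
      by (rule power_mono) simp
    then show ?thesis by (simp only: power2_abs)
  qed
  have "(\<Sum>r=1..n. (\<Sum>c=1..n. A r c * x c)\<^sup>2) \<le> (\<Sum>r=1..n. (real n * \<epsilon>)\<^sup>2)"
    using row by (rule sum_mono)
  also have "\<dots> = real n * (real n * \<epsilon>)\<^sup>2" by simp
  also have "\<dots> \<le> (real n * real n * \<epsilon>)\<^sup>2"
  proof -
    have "real n \<le> real n * real n" by (cases n) auto
    then have "real n * (real n * \<epsilon>)\<^sup>2 \<le> (real n * real n) * (real n * \<epsilon>)\<^sup>2"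
      by (intro mult_right_mono) auto
    then show ?thesis by (simp add: power2_eq_square algebra_simps)
  qed
  finally have "y \<le> sqrt ((real n * real n * \<epsilon>)\<^sup>2)" unfolding y by (rule real_sqrt_le_mono)
  moreover have "sqrt ((real n * real n * \<epsilon>)\<^sup>2) = real n * real n * \<epsilon>"
    using e by (simp only: real_sqrt_abs) simp
  ultimately show "y \<le> real n * real n * \<epsilon>" by simp
qed

lemma rate_bound:
  fixes b :: real and K n :: nat
  assumes b: "0 < b" "b < 1" and K: "K \<ge> 1"
  shows "b ^ (n div K) \<le> (b powr (1 / real K)) ^ n / b"
proof -
  let ?q = "n div K"
  have m: "n mod K < K" using K by simp
  have e: "(?q + 1) * K = ?q * K + K" by simp
  have "n < (?q + 1) * K" using m e div_mult_mod_eq[of n K] by linarith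
  then have "real n < real ((?q + 1) * K)" by (simp only: of_nat_less_iff)
  then have "real n < (real ?q + 1) * real K" by (simp add: algebra_simps)
  then have le: "real n / real K \<le> real ?q + 1" using K by (simp add: field_simps)
  have "b ^ ?q * b = b powr (real ?q + 1)" using b by (simp add: powr_add powr_realpow)
  also have "\<dots> \<le> b powr (real n / real K)" using le b by (intro powr_mono') auto
  also have "\<dots> = (b powr (1 / real K)) ^ n"
    using b by (simp add: powr_realpow[symmetric] powr_powr)
  finally show ?thesis using b by (simp add: field_simps)
qed

context L5 begin

lemma main:
  shows "(\<forall>k. row_stochastic ((D + 2) * I) (Waug I E D W ik d k))
       \<and> (\<forall>k. \<forall>r\<in>{1..(D + 2) * I}. \<forall>c\<in>{1..I}.
            Waug_prod I E D W ik d k (K1 I T D - 1) r c \<ge> m ^ K1 I T D)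
       \<and> (\<exists>C2 > 0. \<exists>\<psi> :: nat \<Rightarrow> nat \<Rightarrow> real.
            (\<forall>k. stochastic_vec ((D + 2) * I) (\<psi> k))
          \<and> (\<forall>k t. t \<le> k \<longrightarrow>
               spec_norm ((D + 2) * I) (\<lambda>r c. Waug_prod I E D W ik d t (k - t) r c - \<psi> t c)
                 \<le> C2 * ((1 - m ^ K1 I T D) powr (1 / real (K1 I T D))) ^ (k - t))
          \<and> (\<forall>k. \<forall>i\<in>{1..I}. \<psi> k i \<ge> m ^ K1 I T D))"
  unfolding N_def[symmetric]
proof (intro conjI allI ballI)
  show "row_stochastic N (Wa k)" for k by (rule Wa_rs)
  show "P k (KK - 1) r c \<ge> eta" if "r \<in> {1..N}" "c \<in> {1..I}" for k r c using part_b that by blast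
  let ?b = "1 - eta"
  let ?\<rho> = "?b powr (1 / real KK)"
  have b: "0 < ?b" "?b < 1" using eta_pos by auto
  show "\<exists>C2>0. \<exists>\<psi>. (\<forall>k. stochastic_vec N (\<psi> k)) \<and>
          (\<forall>k t. t \<le> k \<longrightarrow> spec_norm N (\<lambda>r c. P t (k - t) r c - \<psi> t c) \<le> C2 * ?\<rho> ^ (k - t)) \<and>
          (\<forall>k. \<forall>i\<in>{1..I}. eta \<le> \<psi> k i)"
  proof (intro exI conjI allI impI ballI)
    show "real N * real N / ?b > 0" using b N_ge by auto
    show "stochastic_vec N (psi k)" for k unfolding stochastic_vec_def using psi_nonneg psi_sum by auto
    show "eta \<le> psi k i" if "i \<in> {1..I}" for k i using psi_eta that by blast
    fix k t :: nat assume "t \<le> k"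
    let ?n = "k - t"
    have ent: "\<bar>P t ?n r c - psi t c\<bar> \<le> ?\<rho> ^ ?n / ?b" if r: "r \<in> {1..N}" and c: "c \<in> {1..N}" for r c
    proof -
      have "\<bar>P t ?n r c - psi t c\<bar> \<le> Sp t ?n c" using psi_close r by blast
      also have "\<dots> \<le> ?b ^ (?n div KK)" using c by (intro Sp_contr) auto
      also have "\<dots> \<le> ?\<rho> ^ ?n / ?b" using rate_bound[OF b KK_pos] by blast
      finally show ?thesis .
    qed
    have "spec_norm N (\<lambda>r c. P t ?n r c - psi t c) \<le> real N * real N * (?\<rho> ^ ?n / ?b)"
      using ent b by (intro spec_norm_bound) auto
    then show "spec_norm N (\<lambda>r c. P t ?n r c - psi t c) \<le> real N * real N / ?b * ?\<rho> ^ ?n"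
      by (simp add: field_simps)
  qed
qed

end

theorem lemma5:
  fixes I T D :: nat and E :: "(nat \<times> nat) set" and m :: real
    and W :: "nat \<Rightarrow> nat \<Rightarrow> real" and ik :: "nat \<Rightarrow> nat" and d :: "nat \<Rightarrow> nat \<Rightarrow> nat"
  assumes "I \<ge> 1"
    and "strongly_connected_digraph I E"
    and "0 < m" and "m < 1"
    and "row_stochastic I W"
    and "compatible I E m W"
    and "asynchrony I E T D ik d"
  shows "(\<forall>k. row_stochastic ((D + 2) * I) (Waug I E D W ik d k))
       \<and> (\<forall>k. \<forall>r\<in>{1..(D + 2) * I}. \<forall>c\<in>{1..I}.
            Waug_prod I E D W ik d k (K1 I T D - 1) r c \<ge> m ^ K1 I T D)
       \<and> (\<exists>C2 > 0. \<exists>\<psi> :: nat \<Rightarrow> nat \<Rightarrow> real.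
            (\<forall>k. stochastic_vec ((D + 2) * I) (\<psi> k))
          \<and> (\<forall>k t. t \<le> k \<longrightarrow>
               spec_norm ((D + 2) * I) (\<lambda>r c. Waug_prod I E D W ik d t (k - t) r c - \<psi> t c)
                 \<le> C2 * ((1 - m ^ K1 I T D) powr (1 / real (K1 I T D))) ^ (k - t))
          \<and> (\<forall>k. \<forall>i\<in>{1..I}. \<psi> k i \<ge> m ^ K1 I T D))"
proof -
  interpret L: L5 I T D E m W ik d using assms by unfold_locales
  show ?thesis by (rule L.main)
qed

end
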